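(* Let $\alpha\ge6$ and $f_\alpha(y)=\sum_{k,l\in\mathbb{Z}}e^{-\pi\alpha\phi_{k,l}(y)}$. Then the maximum of $f_\alpha$ over $[\sqrt3/2,\infty)$ is attained at some point $y\le\tfrac{\sqrt3}2+\tfrac1{3\sqrt\alpha}$.
   Context: For $y>0$ and $(k,l)\in\mathbb{Z}^2$: $\phi_{k,l}(y)=\frac{(2k+l+1)^2}{4y}+y\big(l+\frac12-\frac1{8y^2}\big)^2$. *)

theory Defs
  imports "HOL-Analysis.Analysis"
begin

definition phi :: "int \<Rightarrow> int \<Rightarrow> real \<Rightarrow> real" where
  "phi k l y = (2 * real_of_int k + real_of_int l + 1)^2 / (4 * y)
      + y * (real_of_int l + 1/2 - 1 / (8 * y^2))^2"

definition f_alpha :: "real \<Rightarrow> real \<Rightarrow> real" where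
  "f_alpha \<alpha> y = (\<Sum>\<^sub>\<infinity>(k,l)\<in>(UNIV :: (int \<times> int) set). exp (- pi * \<alpha> * phi k l y))"

end

theory Submission
  imports Defs
begin


lemma sqrt3_bounds: "433/250 \<le> sqrt 3" "sqrt 3 \<le> 17321/10000"
proof -
  show "433/250 \<le> sqrt 3" by (rule real_le_rsqrt) (simp add: power_divide)
  show "sqrt 3 \<le> 17321/10000" by (rule real_le_lsqrt) (simp_all add: power_divide)
qed

lemma sq_ge: fixes a x :: real assumes "0 \<le> a" "a \<le> \<bar>x\<bar>" shows "a^2 \<le> x^2"
  by (metis assms power2_abs power_mono)

lemma m_sq_bound:
  fixes m :: real and t y :: real
  assumes "y > 0"
  shows "\<bar>m\<bar> * \<bar>t\<bar> \<le> m^2/(4*y) + y*t^2"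
proof -
  have "0 \<le> (\<bar>m\<bar> - 2*y*\<bar>t\<bar>)^2/(4*y)" using assms by simp
  also have "\<dots> = m^2/(4*y) + y*t^2 - \<bar>m\<bar> * \<bar>t\<bar>"
    using assms by (simp add: field_simps power2_eq_square abs_mult_self_eq)
  finally show ?thesis by simp
qed

lemma phi_nonmain:
  fixes k l :: int and y :: real
  assumes y: "sqrt 3/2 \<le> y" and nm: "(k,l) \<notin> {(0,0),(-1,0),(0,-1)}"
  shows "7/10 + \<bar>real_of_int k\<bar>/16 + \<bar>real_of_int l\<bar>/20 \<le> phi k l y"
proof -
  have yb: "(433/500) \<le> y" using y sqrt3_bounds by linarith
  hence ypos: "y > 0" by simp
  define u where "u = 1/(8*y^2)"
  have y2: "3/4 \<le> y^2"
  proof -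
    have "(sqrt 3/2)^2 \<le> y^2" using y by (intro power_mono) auto
    then show ?thesis by (simp add: power_divide)
  qed
  have u0: "0 < u" using ypos by (simp add: u_def)
  have y2p: "0 < y^2" using ypos by simp
  have u1: "u \<le> 1/6" unfolding u_def using y2 y2p by (simp add: divide_simps)
  define t where "t = real_of_int l + 1/2 - u"
  define m where "m = 2*real_of_int k + real_of_int l + 1"
  have ph: "phi k l y = m^2/(4*y) + y*t^2" by (simp add: phi_def m_def t_def u_def)
  have F1: "\<bar>m\<bar> * \<bar>t\<bar> \<le> phi k l y" using ph m_sq_bound[OF ypos] by simp
  have F2: "1/3 \<le> \<bar>t\<bar>"
  proof (cases "l \<ge> 0")
    case True then show ?thesis using u1 by (simp add: t_def)
  next
    case False then have "real_of_int l \<le> -1" by simp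
    then show ?thesis using u0 by (simp add: t_def)
  qed
  have F4: "\<bar>real_of_int l\<bar> - 3/4 \<le> t^2"
  proof (cases "l \<ge> 0")
    case True
    hence "real_of_int l + 1/3 \<le> t" "0 \<le> real_of_int l" using u1 by (auto simp: t_def)
    hence "(real_of_int l + 1/3)^2 \<le> t^2" by (intro power_mono) auto
    moreover have "real_of_int l - 3/4 \<le> (real_of_int l + 1/3)^2"
    proof -
      have "0 \<le> (real_of_int l - 1/6)^2" by simp
      then show ?thesis by (simp add: power2_eq_square algebra_simps)
    qed
    ultimately show ?thesis using True by simp
  next
    case False then have l1: "real_of_int l \<le> -1" by simp
    hence "t \<le> real_of_int l + 1/2" using u0 by (simp add: t_def)
    hence "(-real_of_int l - 1/2)^2 \<le> t^2" using l1 
      by (intro sq_ge) auto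
    moreover have "- real_of_int l - 3/4 \<le> (-real_of_int l - 1/2)^2"
    proof -
      have "0 \<le> (real_of_int l + 1)^2" by simp
      then show ?thesis by (simp add: power2_eq_square algebra_simps)
    qed
    ultimately show ?thesis using l1 by simp
  qed
  have yt: "y * t^2 \<le> phi k l y" using ph ypos by simp
  have yt2: "(433/500) * t^2 \<le> y * t^2" using yb by (intro mult_right_mono) auto
  have F5: "1 \<le> phi k l y"
  proof -
    consider "l \<ge> 1" | "l \<le> -2" | "l = 0" | "l = -1" by linarith
    then show ?thesis
    proof cases
      case 1
      hence "4/3 \<le> t" using u1 by (simp add: t_def)
      hence "(4/3)^2 \<le> t^2" by (intro power_mono) auto
      then have "16/9 \<le> t^2" by (simp add: power_divide)
      then show ?thesis using yt yt2 by linarith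
    next
      case 2
      hence "t \<le> -3/2" using u0 by (simp add: t_def)
      hence "(3/2)^2 \<le> t^2" by (intro sq_ge) auto
      then have "9/4 \<le> t^2" by (simp add: power_divide)
      then show ?thesis using yt yt2 by linarith
    next
      case 3
      with nm have "k \<noteq> 0" "k \<noteq> -1" by auto
      hence "\<bar>2*k+1\<bar> \<ge> 3" by linarith
      hence "\<bar>m\<bar> \<ge> 3" using 3 unfolding m_def by linarith
      hence m9: "3^2 \<le> m^2" by (intro sq_ge) auto
      have "1/3 \<le> t" using 3 u1 by (simp add: t_def)
      hence t9: "(1/3)^2 \<le> t^2" by (intro sq_ge) auto
      have "9/(4*y) + y/9 \<le> phi k l y"
      proof -
        have "3^2/(4*y) \<le> m^2/(4*y)" using m9 ypos by (intro divide_right_mono) auto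
        moreover have "y*(1/3)^2 \<le> y*t^2" using t9 ypos by (simp add: mult_left_mono)
        ultimately show ?thesis using ph by (simp add: power_divide)
      qed
      moreover have "1 \<le> 9/(4*y) + y/9"
      proof -
        have "0 \<le> (2*y-9)^2/(36*y)" using ypos by simp
        also have "\<dots> = 9/(4*y) + y/9 - 1" using ypos by (simp add: field_simps power2_eq_square)
        finally show ?thesis by simp
      qed
      ultimately show ?thesis by simp
    next
      case 4
      with nm have "k \<noteq> 0" by auto
      hence "\<bar>k\<bar> \<ge> 1" by linarith
      hence "\<bar>m\<bar> \<ge> 2" using 4 unfolding m_def by linarith
      hence m9: "2^2 \<le> m^2" by (intro sq_ge) auto
      have "t \<le> -1/2" using 4 u0 by (simp add: t_def)
      hence t9: "(1/2)^2 \<le> t^2" by (intro sq_ge) auto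
      have "4/(4*y) + y/4 \<le> phi k l y"
      proof -
        have "2^2/(4*y) \<le> m^2/(4*y)" using m9 ypos by (intro divide_right_mono) auto
        moreover have "y*(1/2)^2 \<le> y*t^2" using t9 ypos by (simp add: mult_left_mono)
        ultimately show ?thesis using ph by (simp add: power_divide)
      qed
      moreover have "1 \<le> 4/(4*y) + y/4"
      proof -
        have "0 \<le> (y-2)^2/(4*y)" using ypos by simp
        also have "\<dots> = 4/(4*y) + y/4 - 1" using ypos by (simp add: field_simps power2_eq_square)
        finally show ?thesis by simp
      qed
      ultimately show ?thesis by simp
    qed
  qed
  have Fm: "\<bar>m\<bar>/3 \<le> phi k l y"
  proof -
    have "\<bar>m\<bar>/3 \<le> \<bar>m\<bar> * \<bar>t\<bar>" using mult_left_mono[OF F2, of "\<bar>m\<bar>"] by simp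
    then show ?thesis using F1 by simp
  qed
  have mk: "2*\<bar>real_of_int k\<bar> - \<bar>real_of_int l\<bar> - 1 \<le> \<bar>m\<bar>" unfolding m_def by linarith
  have "433/500 * (\<bar>real_of_int l\<bar> - 3/4) \<le> 433/500 * t^2" using F4 by (intro mult_left_mono) auto
  hence "(433/500) * \<bar>real_of_int l\<bar> - 1299/2000 \<le> phi k l y" using yt yt2 by (simp add: algebra_simps)
  then show ?thesis using F5 Fm mk by linarith
qed

definition g :: "real \<Rightarrow> real" where "g y = y/4 + 1/(8*y) + 1/(64*y^3)"

lemma phi_main:
  assumes "y > 0"
  shows "phi 0 0 y = g y" "phi (-1) 0 y = g y" "phi 0 (-1) y = g y"
  using assms by (simp_all add: phi_def g_def field_simps power2_eq_square power3_eq_cube)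


lemma geo_nat_le:
  fixes q :: real
  assumes "0 \<le> q" "q < 1" "finite N"
  shows "(\<Sum>n\<in>N. q ^ n) \<le> 1/(1-q)"
proof -
  have "(\<Sum>n\<in>N. q ^ n) \<le> (\<Sum>n. q ^ n)"
    using assms by (intro sum_le_suminf summable_geometric) auto
  also have "\<dots> = 1/(1-q)" using assms by (intro suminf_geometric) auto
  finally show ?thesis .
qed

lemma geo_int:
  fixes q :: real
  assumes q: "0 \<le> q" "q < 1" and K: "finite K"
  shows "(\<Sum>k\<in>K. q ^ nat \<bar>k\<bar>) \<le> (1+q)/(1-q)"
proof -
  define K1 where "K1 = K \<inter> {0..}"
  define K2 where "K2 = K \<inter> {..<0}"
  have KK: "K = K1 \<union> K2" "K1 \<inter> K2 = {}" by (auto simp: K1_def K2_def)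
  have f1: "finite K1" "finite K2" using K by (auto simp: K1_def K2_def)
  have s1: "(\<Sum>k\<in>K1. q ^ nat \<bar>k\<bar>) \<le> 1/(1-q)"
  proof -
    have inj: "inj_on nat K1" by (auto simp: K1_def inj_on_def)
    have "(\<Sum>k\<in>K1. q ^ nat \<bar>k\<bar>) = (\<Sum>k\<in>K1. q ^ nat k)"
      by (intro sum.cong) (auto simp: K1_def)
    also have "\<dots> = (\<Sum>n\<in>nat ` K1. q ^ n)"
      using sum.reindex[OF inj, of "\<lambda>n. q ^ n"] by simp
    also have "\<dots> \<le> 1/(1-q)" using q f1 by (intro geo_nat_le) auto
    finally show ?thesis .
  qed
  have s2: "(\<Sum>k\<in>K2. q ^ nat \<bar>k\<bar>) \<le> q * (1/(1-q))"
  proof -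
    have inj: "inj_on (\<lambda>k. nat (-k-1)) K2" by (auto simp: K2_def inj_on_def)
    have "(\<Sum>k\<in>K2. q ^ nat \<bar>k\<bar>) = (\<Sum>k\<in>K2. q * q ^ nat (-k-1))"
    proof (intro sum.cong refl)
      fix k assume "k \<in> K2"
      hence "nat \<bar>k\<bar> = Suc (nat (-k-1))" by (auto simp: K2_def)
      thus "q ^ nat \<bar>k\<bar> = q * q ^ nat (-k-1)" by simp
    qed
    also have "\<dots> = q * (\<Sum>k\<in>K2. q ^ nat (-k-1))" by (simp add: sum_distrib_left)
    also have "(\<Sum>k\<in>K2. q ^ nat (-k-1)) = (\<Sum>n\<in>(\<lambda>k. nat (-k-1)) ` K2. q ^ n)"
      using sum.reindex[OF inj, of "\<lambda>n. q ^ n"] by simp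
    also have "q * \<dots> \<le> q * (1/(1-q))" using q f1 by (intro mult_left_mono geo_nat_le) auto
    finally show ?thesis .
  qed
  have "(\<Sum>k\<in>K. q ^ nat \<bar>k\<bar>) = (\<Sum>k\<in>K1. q ^ nat \<bar>k\<bar>) + (\<Sum>k\<in>K2. q ^ nat \<bar>k\<bar>)"
    using KK f1 by (simp add: sum.union_disjoint)
  also have "\<dots> \<le> 1/(1-q) + q * (1/(1-q))" using s1 s2 by linarith
  also have "\<dots> = (1+q)/(1-q)" using q by (simp add: field_simps)
  finally show ?thesis .
qed

lemma geo_int2:
  fixes p q :: real
  assumes p: "0 \<le> p" "p < 1" and q: "0 \<le> q" "q < 1" and F: "finite F"
  shows "(\<Sum>x\<in>F. p ^ nat \<bar>fst x\<bar> * q ^ nat \<bar>snd x\<bar>) \<le> (1+p)/(1-p) * ((1+q)/(1-q))"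
proof -
  have sub: "F \<subseteq> fst ` F \<times> snd ` F" by force
  have fin: "finite (fst ` F \<times> snd ` F)" using F by simp
  have "(\<Sum>x\<in>F. p ^ nat \<bar>fst x\<bar> * q ^ nat \<bar>snd x\<bar>) \<le> (\<Sum>x\<in>fst ` F \<times> snd ` F. p ^ nat \<bar>fst x\<bar> * q ^ nat \<bar>snd x\<bar>)"
    using p q by (intro sum_mono2[OF fin sub]) auto
  also have "\<dots> = (\<Sum>k\<in>fst ` F. p ^ nat \<bar>k\<bar>) * (\<Sum>l\<in>snd ` F. q ^ nat \<bar>l\<bar>)"
    by (simp add: sum_product sum.cartesian_product case_prod_beta)
  also have "\<dots> \<le> (1+p)/(1-p) * ((1+q)/(1-q))"
    using p q F by (intro mult_mono geo_int sum_nonneg) auto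
  finally show ?thesis .
qed

lemma aux_lin: fixes a b c d :: real
  shows "a \<le> 1/6 \<Longrightarrow> b \<le> 16/9 \<Longrightarrow> c \<le> 16/9 \<Longrightarrow> d \<le> 16/9 \<Longrightarrow> 0 \<le> 1/4 - a - (b+c+d)/64"
  by (simp only: add_divide_distrib)

lemma g_mono:
  assumes z: "sqrt 3/2 \<le> z" and zy: "z \<le> y"
  shows "g z \<le> g y"
proof -
  have z2: "3/4 \<le> z^2"
  proof -
    have "(sqrt 3/2)^2 \<le> z^2" using z by (intro power_mono) auto
    then show ?thesis by (simp add: power_divide)
  qed
  have zpos: "z > 0" using z sqrt3_bounds by linarith
  have ypos: "y > 0" using zpos zy by linarith
  have y2: "z^2 \<le> y^2" using zy zpos by (intro power_mono) auto
  have yz: "z^2 \<le> y*z" using zy zpos by (simp add: power2_eq_square mult_right_mono)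
  have yz2: "3/4 \<le> y*z" using yz z2 by linarith
  have a1: "1/(8*(y*z)) \<le> 1/6" using yz2 by (simp add: divide_simps)
  have b1: "1/((y*z)*z^2) \<le> 16/9"
  proof -
    have "(3/4)*(3/4) \<le> (y*z)*z^2" using yz2 z2 by (intro mult_mono) auto
    then show ?thesis by (simp add: divide_simps)
  qed
  have b2: "1/((y*z)*y^2) \<le> 16/9"
  proof -
    have "(3/4)*(3/4) \<le> (y*z)*y^2" using yz2 z2 y2 by (intro mult_mono) auto
    then show ?thesis by (simp add: divide_simps)
  qed
  have b3: "1/((y*z)*(y*z)) \<le> 16/9"
  proof -
    have "(3/4)*(3/4) \<le> (y*z)*(y*z)" using yz2 by (intro mult_mono) auto
    then show ?thesis by (simp add: divide_simps)
  qed
  have br: "0 \<le> 1/4 - 1/(8*(y*z)) - (1/((y*z)*z^2) + 1/((y*z)*y^2) + 1/((y*z)*(y*z)))/64"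
    using aux_lin[OF a1 b1 b2 b3] .
  have id: "g y - g z = (y - z) * (1/4 - 1/(8*(y*z)) - (1/((y*z)*z^2) + 1/((y*z)*y^2) + 1/((y*z)*(y*z)))/64)"
    using zpos ypos by (simp add: g_def field_simps power2_eq_square power3_eq_cube)
  have "0 \<le> g y - g z" unfolding id using br zy by simp
  then show ?thesis by simp
qed


lemma g_at: "g (sqrt 3/2) = 2 * sqrt 3 / 9"
proof -
  have s: "sqrt 3 * sqrt 3 = 3" by simp
  have "sqrt 3 ^ 3 = 3 * sqrt 3" by (simp add: power3_eq_cube)
  then show ?thesis unfolding g_def by (simp add: field_simps power3_eq_cube s) 
qed

lemma g0_le: "g (sqrt 3/2) \<le> 385/1000"
  using g_at sqrt3_bounds by simp

lemma g_quad:
  assumes y: "sqrt 3/2 \<le> y" "y \<le> 101/100"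
  shows "3/10 * (y - sqrt 3/2)^2 \<le> g y - g (sqrt 3/2)"
proof -
  define s where "s = sqrt 3"
  have s2: "s * s = 3" by (simp add: s_def)
  have sb: "433/250 \<le> s" using sqrt3_bounds by (simp add: s_def)
  have yb: "433/500 \<le> y" using y sqrt3_bounds by linarith
  hence ypos: "y > 0" by simp
  have id: "g y - 2* s/9 = (y - s/2)^2 * ((16*y^2 + (16* s/9)*y + 4/3)/(64*y^3))"
  proof -
    have "g y - 2* s/9 = (16*y^4 + 8*y^2 + 1 - 64*y^3*(2* s/9))/(64*y^3)"
      using ypos by (simp add: g_def field_simps power2_eq_square power3_eq_cube power4_eq_xxxx)
    also have "16*y^4 + 8*y^2 + 1 - 64*y^3*(2* s/9) = (y - s/2)^2 * (16*y^2 + (16* s/9)*y + 4/3)"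
    proof -
      have "(y - s/2)^2 * (16*y^2 + (16* s/9)*y + 4/3) =
         16*y^4 + (16* s/9 - 16* s)*y^3 + (4/3 - 16*(s * s)/9 + 4*(s * s))*y^2 + ((s * s)*(4/9)* s - 4* s/3)*y + (s * s)/3"
        by (simp add: power2_eq_square field_simps power4_eq_xxxx power3_eq_cube)
      also have "\<dots> = 16*y^4 + 8*y^2 + 1 - 64*y^3*(2* s/9)" unfolding s2
        by (simp add: algebra_simps)
      finally show ?thesis by simp
    qed
    finally show ?thesis by simp
  qed
  have y3: "y^3 \<le> 101/100 * y^2" using y ypos by (simp add: power2_eq_square power3_eq_cube mult_right_mono)
  have y2: "y^2 \<le> 101/100 * y" using y ypos by (simp add: power2_eq_square mult_right_mono)
  have sy: "433/250 * y \<le> s*y" using sb ypos by (simp add: mult_right_mono)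
  have e: "(16* s/9)*y = 16/9*(s*y)" by simp
  have P: "3/10 * (64*y^3) \<le> 16*y^2 + (16* s/9)*y + 4/3" unfolding e using y3 y2 sy yb y(2) by linarith
  have y3p: "0 < 64*y^3" using ypos by simp
  define R where "R = (16*y^2 + (16* s/9)*y + 4/3)/(64*y^3)"
  have "3/10 \<le> R" unfolding R_def using P y3p by (simp add: divide_simps)
  hence "(y - s/2)^2 * (3/10) \<le> (y - s/2)^2 * R"
    by (rule mult_left_mono) simp
  moreover have "g y - g (sqrt 3/2) = (y - s/2)^2 * R" using id g_at unfolding R_def s_def by simp
  ultimately show ?thesis unfolding s_def by linarith
qed

lemma exp_sq_bound: "0 \<le> (x::real) \<Longrightarrow> (1 + x/2 + (x/2)^2/2)^2 \<le> exp x"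
proof -
  assume x: "0 \<le> x"
  have "1 + x/2 + (x/2)^2/2 \<le> exp (x/2)" using x by (intro exp_lower_Taylor_quadratic) simp
  hence "(1 + x/2 + (x/2)^2/2)^2 \<le> exp (x/2) ^ 2" using x by (intro power_mono) auto
  also have "exp (x/2) ^ 2 = exp x" by (simp flip: exp_of_nat_mult)
  finally show ?thesis .
qed

lemma final_numeric:
  fixes c :: real
  assumes c: "18 \<le> c"
  shows "3 * exp (-1/10) + exp (-(63/200)*c) * ((1 + exp (-c/16))/(1 - exp (-c/16)) * ((1 + exp (-c/20))/(1 - exp (-c/20)))) \<le> 3"
proof -
  have e1: "exp (-1/10::real) \<le> 10/11"
  proof -
    have "11/10 \<le> exp (1/10::real)" using exp_ge_add_one_self[of "1/10::real"] by simp
    then show ?thesis by (simp add: exp_minus divide_simps)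
  qed
  have p: "exp (-c/16) \<le> 371/1000"
  proof -
    have "1 + c/16 + (c/16)^2/2 \<le> exp (c/16)" using c by (intro exp_lower_Taylor_quadratic) simp
    moreover have "(18/16)^2 \<le> (c/16)^2" using c by (intro power_mono) auto
    ultimately have "27/10 \<le> exp (c/16)" using c by (simp add: power_divide) 
    then show ?thesis by (simp add: exp_minus divide_simps)
  qed
  have q: "exp (-c/20) \<le> 444/1000"
  proof -
    have "1 + c/20 + (c/20)^2/2 \<le> exp (c/20)" using c by (intro exp_lower_Taylor_quadratic) simp
    moreover have "(18/20)^2 \<le> (c/20)^2" using c by (intro power_mono) auto
    ultimately have "23/10 \<le> exp (c/20)" using c by (simp add: power_divide) 
    then show ?thesis by (simp add: exp_minus divide_simps)
  qed
  have r: "exp (-(63/200)*c) \<le> 1/60"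
  proof -
    have x: "0 \<le> (63/200)*c" using c by simp
    have "(1 + (63/200)*c/2 + ((63/200)*c/2)^2/2)^2 \<le> exp ((63/200)*c)" using exp_sq_bound[OF x] .
    moreover have "(1 + (63/200)*18/2 + ((63/200)*18/2)^2/2) \<le> (1 + (63/200)*c/2 + ((63/200)*c/2)^2/2)"
    proof -
      have A: "(63/200)*18/2 \<le> (63/200)*c/2" using c by simp
      have "((63/200)*18/2)^2 \<le> ((63/200)*c/2)^2" by (rule power_mono[OF A]) simp
      then show ?thesis using A by linarith
    qed
    moreover have "(60::real) \<le> (1 + (63/200)*18/2 + ((63/200)*18/2)^2/2)^2" by (simp add: power2_eq_square)
    moreover have "0 \<le> (1 + (63/200)*18/2 + ((63/200)*18/2)^2/2::real)" by simp
    ultimately have "60 \<le> exp ((63/200)*c)"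
      using power_mono[of "1 + (63/200)*18/2 + ((63/200)*18/2)^2/2" "1 + (63/200)*c/2 + ((63/200)*c/2)^2/2" 2]
      by linarith
    then show ?thesis by (simp add: exp_minus divide_simps)
  qed
  have Sa: "(1 + exp (-c/16))/(1 - exp (-c/16)) \<le> 22/10"
    using p c by (simp add: divide_simps)
  have Sb: "(1 + exp (-c/20))/(1 - exp (-c/20)) \<le> 26/10"
    using q c by (simp add: divide_simps)
  have Sa0: "0 \<le> (1 + exp (-c/16))/(1 - exp (-c/16))" using p c by (intro divide_nonneg_nonneg) auto
  have Sb0: "0 \<le> (1 + exp (-c/20))/(1 - exp (-c/20))" using q c by (intro divide_nonneg_nonneg) auto
  have SS: "(1 + exp (-c/16))/(1 - exp (-c/16)) * ((1 + exp (-c/20))/(1 - exp (-c/20))) \<le> 22/10 * (26/10)"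
    by (rule mult_mono[OF Sa Sb]) (use Sb0 in simp_all)
  have S0: "0 \<le> (1 + exp (-c/16))/(1 - exp (-c/16)) * ((1 + exp (-c/20))/(1 - exp (-c/20)))"
    using Sa0 Sb0 by (rule mult_nonneg_nonneg)
  have "exp (-(63/200)*c) * ((1 + exp (-c/16))/(1 - exp (-c/16)) * ((1 + exp (-c/20))/(1 - exp (-c/20)))) \<le> 1/60 * (22/10 * (26/10))"
    by (rule mult_mono[OF r SS]) (use S0 in simp_all)
  then show ?thesis using e1 by linarith
qed


definition Gf :: "real \<Rightarrow> int \<times> int \<Rightarrow> real" where
  "Gf c x = exp (-c * (\<bar>real_of_int (fst x)\<bar>/16 + \<bar>real_of_int (snd x)\<bar>/20))"

lemma Gf_pow: "Gf c x = exp (-c/16) ^ nat \<bar>fst x\<bar> * exp (-c/20) ^ nat \<bar>snd x\<bar>"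
proof -
  have a: "exp (-c/16) ^ nat \<bar>fst x\<bar> = exp (real (nat \<bar>fst x\<bar>) * (-c/16))"
    by (simp only: exp_of_nat_mult)
  have b: "exp (-c/20) ^ nat \<bar>snd x\<bar> = exp (real (nat \<bar>snd x\<bar>) * (-c/20))"
    by (simp only: exp_of_nat_mult)
  show ?thesis unfolding a b Gf_def by (simp add: exp_add[symmetric] algebra_simps)
qed

lemma Gf_nonneg: "0 \<le> Gf c x" by (simp add: Gf_def)

lemma Gf_summable:
  assumes c: "0 < c"
  shows "Gf c summable_on UNIV"
    "infsum (Gf c) UNIV \<le> (1 + exp (-c/16))/(1 - exp (-c/16)) * ((1 + exp (-c/20))/(1 - exp (-c/20)))"
proof -
  have p: "0 \<le> exp (-c/16)" "exp (-c/16) < 1" using c by auto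
  have q: "0 \<le> exp (-c/20)" "exp (-c/20) < 1" using c by auto
  have bnd: "sum (Gf c) F \<le> (1 + exp (-c/16))/(1 - exp (-c/16)) * ((1 + exp (-c/20))/(1 - exp (-c/20)))"
    if "finite F" for F
    unfolding Gf_pow using geo_int2[OF p q that] .
  show s: "Gf c summable_on UNIV"
    by (rule nonneg_bdd_above_summable_on) (auto simp: Gf_nonneg intro!: bdd_aboveI2 bnd)
  show "infsum (Gf c) UNIV \<le> (1 + exp (-c/16))/(1 - exp (-c/16)) * ((1 + exp (-c/20))/(1 - exp (-c/20)))"
    by (rule infsum_le_finite_sums[OF s]) (rule bnd)
qed

lemma phi_nonneg: "y > 0 \<Longrightarrow> 0 \<le> phi k l y"
  unfolding phi_def by (intro add_nonneg_nonneg divide_nonneg_nonneg mult_nonneg_nonneg) auto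

lemma E_nonmain:
  assumes a: "0 \<le> \<alpha>" and y: "sqrt 3/2 \<le> y" and nm: "(k,l) \<notin> {(0,0),(-1,0),(0,-1)}"
  shows "exp (- pi * \<alpha> * phi k l y) \<le> exp (-(pi*\<alpha>)*(7/10)) * Gf (pi*\<alpha>) (k,l)"
proof -
  have "exp (-(pi*\<alpha>)*(7/10)) * Gf (pi*\<alpha>) (k,l) =
        exp (-((pi*\<alpha>) * (7/10 + \<bar>real_of_int k\<bar>/16 + \<bar>real_of_int l\<bar>/20)))"
    unfolding Gf_def by (simp add: exp_add[symmetric] algebra_simps)
  moreover have "(pi*\<alpha>) * (7/10 + \<bar>real_of_int k\<bar>/16 + \<bar>real_of_int l\<bar>/20) \<le> (pi*\<alpha>) * phi k l y"
    using a by (intro mult_left_mono phi_nonmain[OF y nm]) auto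
  ultimately show ?thesis by simp
qed

lemma E_all:
  assumes a: "0 \<le> \<alpha>" and y: "sqrt 3/2 \<le> y"
  shows "exp (- pi * \<alpha> * phi k l y) \<le> exp ((pi*\<alpha>)*(1/16+1/20)) * Gf (pi*\<alpha>) (k,l)"
proof (cases "(k,l) \<in> {(0,0),(-1,0),(0,-1)}")
  case True
  have ypos: "y > 0" using y sqrt3_bounds by linarith
  have c0: "0 \<le> pi*\<alpha>" using a by simp
  have "exp (- pi * \<alpha> * phi k l y) \<le> 1"
    using phi_nonneg[OF ypos, of k l] c0 by (simp add: mult_nonneg_nonneg)
  also have "1 \<le> exp ((pi*\<alpha>)*(1/16+1/20)) * Gf (pi*\<alpha>) (k,l)"
  proof -
    have kl: "\<bar>real_of_int k\<bar> \<le> 1" "\<bar>real_of_int l\<bar> \<le> 1" using True by auto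
    have "exp ((pi*\<alpha>)*(1/16+1/20)) * Gf (pi*\<alpha>) (k,l) =
          exp ((pi*\<alpha>)*((1 - \<bar>real_of_int k\<bar>)/16 + (1 - \<bar>real_of_int l\<bar>)/20))"
      unfolding Gf_def by (simp add: exp_add[symmetric] algebra_simps diff_divide_distrib)
    moreover have "0 \<le> (pi*\<alpha>)*((1 - \<bar>real_of_int k\<bar>)/16 + (1 - \<bar>real_of_int l\<bar>)/20)"
      using kl c0 a by (intro mult_nonneg_nonneg) auto
    ultimately show ?thesis by simp
  qed
  finally show ?thesis .
next
  case False
  have "exp (- pi * \<alpha> * phi k l y) \<le> exp (-(pi*\<alpha>)*(7/10)) * Gf (pi*\<alpha>) (k,l)"
    by (rule E_nonmain[OF a y False])
  also have "\<dots> \<le> exp ((pi*\<alpha>)*(1/16+1/20)) * Gf (pi*\<alpha>) (k,l)"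
    using a by (intro mult_right_mono Gf_nonneg) auto
  finally show ?thesis .
qed


theorem mainTheorem17:
  fixes \<alpha> :: real
  assumes "\<alpha> \<ge> 6"
  shows "\<exists>y0. sqrt 3 / 2 \<le> y0 \<and> y0 \<le> sqrt 3 / 2 + 1 / (3 * sqrt \<alpha>) \<and>
           (\<forall>y. sqrt 3 / 2 \<le> y \<longrightarrow> f_alpha \<alpha> y \<le> f_alpha \<alpha> y0)"
proof -
  define c where "c = pi * \<alpha>"
  have a0: "0 < \<alpha>" using assms by simp
  have c18: "18 \<le> c"
  proof -
    have "3 * 6 \<le> pi * \<alpha>" using pi_gt3 assms by (intro mult_mono) auto
    then show ?thesis by (simp add: c_def)
  qed
  have c0: "0 < c" using c18 by simp
  define y0 where "y0 = sqrt 3 / 2"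
  define \<delta> where "\<delta> = 1 / (3 * sqrt \<alpha>)"
  define y1 where "y1 = y0 + \<delta>"
  define E where "E = (\<lambda>x y. case x of (k,l) \<Rightarrow> exp (- pi * \<alpha> * phi k l y))"
  define M where "M = (\<lambda>x. exp (c*(1/16+1/20)) * Gf c x)"
  define Mset :: "(int \<times> int) set" where "Mset = {(0,0),(-1,0),(0,-1)}"
  have fE: "\<And>y. f_alpha \<alpha> y = infsum (\<lambda>x. E x y) UNIV" by (simp add: f_alpha_def E_def)
  have y0pos: "0 < y0" unfolding y0_def by simp
  have EM: "norm (E x y) \<le> M x" if "y0 \<le> y" for x y
    using E_all[of \<alpha> y "fst x" "snd x"] that a0 unfolding E_def M_def c_def y0_def
    by (cases x) simp
  have E0: "0 \<le> E x y" for x y unfolding E_def by (cases x) simp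
  have Gs: "Gf c summable_on UNIV"
    "infsum (Gf c) UNIV \<le> (1 + exp (-c/16))/(1 - exp (-c/16)) * ((1 + exp (-c/20))/(1 - exp (-c/20)))"
    using Gf_summable[OF c0] by auto
  have Ms: "M summable_on UNIV" unfolding M_def by (intro summable_on_cmult_right Gs)
  have Es: "(\<lambda>x. E x y) summable_on A" if "y0 \<le> y" for y A
  proof -
    have "(\<lambda>x. E x y) summable_on UNIV"
      by (rule summable_on_comparison_test[OF Ms]) (use EM[OF that] E0 in auto)
    then show ?thesis by (rule summable_on_subset_banach) simp
  qed
  have \<delta>pos: "0 < \<delta>" unfolding \<delta>_def using a0 by simp
  have \<delta>sq: "\<delta>^2 = 1/(9*\<alpha>)" unfolding \<delta>_def using a0 by (simp add: power_divide power_mult_distrib)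
  have \<delta>le: "\<delta> \<le> 1362/10000"
  proof -
    have "2449/1000 \<le> sqrt 6" by (rule real_le_rsqrt) (simp add: power_divide)
    moreover have "sqrt 6 \<le> sqrt \<alpha>" using assms by simp
    ultimately have "2449/1000 \<le> sqrt \<alpha>" by linarith
    then show ?thesis unfolding \<delta>_def using a0 by (simp add: divide_simps)
  qed
  have y01: "y0 \<le> y1" unfolding y1_def using \<delta>pos by simp
  have y1le: "y1 \<le> 101/100" unfolding y1_def y0_def using \<delta>le sqrt3_bounds by linarith
  have cont: "continuous_on {y0..y1} (\<lambda>y. infsum (\<lambda>x. E x y) UNIV)"
  proof (rule uniform_limit_theorem)
    show "uniform_limit {y0..y1} (\<lambda>X y. \<Sum>x\<in>X. E x y) (\<lambda>y. \<Sum>\<^sub>\<infinity>x\<in>UNIV. E x y) (finite_subsets_at_top UNIV)"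
      by (rule Weierstrass_m_test_general[OF _ Ms]) (use EM in auto)
    show "\<not> trivial_limit (finite_subsets_at_top (UNIV :: (int \<times> int) set))" by simp
    have "continuous_on {y0..y1} (\<lambda>y. E x y)" for x
    proof -
      obtain k l where x: "x = (k,l)" by (cases x)
      have "continuous_on {y0..y1} (\<lambda>y. exp (- pi * \<alpha> * phi k l y))"
        unfolding phi_def using y0pos by (intro continuous_intros) auto
      then show ?thesis by (simp add: E_def x)
    qed
    then show "\<forall>\<^sub>F X in finite_subsets_at_top UNIV. continuous_on {y0..y1} (\<lambda>y. \<Sum>x\<in>X. E x y)"
      by (intro always_eventually allI continuous_on_sum) auto
  qed
  obtain ym where ym: "ym \<in> {y0..y1}" "\<And>y. y \<in> {y0..y1} \<Longrightarrow> infsum (\<lambda>x. E x y) UNIV \<le> infsum (\<lambda>x. E x ym) UNIV"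
    using continuous_attains_sup[OF compact_Icc _ cont] y01 by auto
  have Emain: "(\<Sum>x\<in>Mset. E x y) = 3 * exp (-c * g y)" if "y0 \<le> y" for y
  proof -
    have yp: "y > 0" using that y0pos by simp
    show ?thesis unfolding Mset_def E_def c_def using phi_main[OF yp] by simp
  qed
  have low: "3 * exp (-c * g y0) \<le> infsum (\<lambda>x. E x y0) UNIV"
  proof -
    have "infsum (\<lambda>x. E x y0) Mset \<le> infsum (\<lambda>x. E x y0) UNIV"
      by (rule infsum_mono2) (use Es E0 in auto)
    moreover have "infsum (\<lambda>x. E x y0) Mset = 3 * exp (-c * g y0)"
      using Emain[of y0] by (simp add: Mset_def)
    ultimately show ?thesis by simp
  qed
  have up: "infsum (\<lambda>x. E x y) UNIV \<le> 3 * exp (-c * g y0)" if y: "y1 \<le> y" for y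
  proof -
    have yy0: "y0 \<le> y" using y y01 by simp
    have gg: "c * g y0 + 1/10 \<le> c * g y"
    proof -
      have "g y1 \<le> g y" using g_mono[of y1 y] y y01 unfolding y0_def by simp
      moreover have "3/10 * (y1 - y0)^2 \<le> g y1 - g y0"
        using g_quad[of y1] y01 y1le unfolding y0_def by simp
      moreover have "c * (3/10 * (y1 - y0)^2) = pi / 30"
        unfolding y1_def c_def using \<delta>sq a0 by (simp add: field_simps)
      moreover have "1/10 \<le> pi / 30" using pi_gt3 by simp
      ultimately have "1/10 \<le> c * (g y - g y0)"
        using c0 by (smt (verit) mult_left_mono)
      then show ?thesis by (simp add: algebra_simps)
    qed
    have split: "infsum (\<lambda>x. E x y) UNIV = infsum (\<lambda>x. E x y) Mset + infsum (\<lambda>x. E x y) (-Mset)"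
    proof -
      have "infsum (\<lambda>x. E x y) (Mset \<union> -Mset) = infsum (\<lambda>x. E x y) Mset + infsum (\<lambda>x. E x y) (-Mset)"
        by (rule infsum_Un_disjoint) (use Es[OF yy0] in auto)
      then show ?thesis by simp
    qed
    have m1: "infsum (\<lambda>x. E x y) Mset = 3 * exp (-c * g y)"
      using Emain[OF yy0] by (simp add: Mset_def)
    have Gs': "Gf c summable_on (-Mset)" using Gs(1) by (rule summable_on_subset_banach) simp
    have m2: "infsum (\<lambda>x. E x y) (-Mset) \<le> exp (-c*(7/10)) * infsum (Gf c) UNIV"
    proof -
      have "infsum (\<lambda>x. E x y) (-Mset) \<le> infsum (\<lambda>x. exp (-c*(7/10)) * Gf c x) (-Mset)"
      proof (rule infsum_mono)
        show "(\<lambda>x. E x y) summable_on - Mset" by (rule Es[OF yy0])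
        show "(\<lambda>x. exp (- c * (7 / 10)) * Gf c x) summable_on - Mset"
          by (intro summable_on_cmult_right Gs')
        fix x assume "x \<in> -Mset"
        then show "E x y \<le> exp (- c * (7 / 10)) * Gf c x"
          using E_nonmain[of \<alpha> y "fst x" "snd x"] a0 yy0
          unfolding E_def c_def Mset_def y0_def by (cases x) auto
      qed
      also have "\<dots> = exp (-c*(7/10)) * infsum (Gf c) (-Mset)"
        by (rule infsum_cmult_right) (use Gs' in auto)
      also have "\<dots> \<le> exp (-c*(7/10)) * infsum (Gf c) UNIV"
        by (intro mult_left_mono infsum_mono2 Gs' Gs(1)) (auto simp: Gf_nonneg)
      finally show ?thesis .
    qed
    define S where "S = (1 + exp (-c/16))/(1 - exp (-c/16)) * ((1 + exp (-c/20))/(1 - exp (-c/20)))"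
    have SG: "infsum (Gf c) UNIV \<le> S" using Gs(2) unfolding S_def .
    have e1: "exp (-c * g y) \<le> exp (-c * g y0) * exp (-1/10)"
      unfolding exp_add[symmetric] using gg by simp
    have e2: "exp (-c*(7/10)) \<le> exp (-c * g y0) * exp (-(63/200)*c)"
    proof -
      have "c * g y0 \<le> c * (385/1000)" using g0_le c0 unfolding y0_def by (intro mult_left_mono) auto
      then show ?thesis unfolding exp_add[symmetric] by simp
    qed
    have fin: "3 * exp (-1/10) + exp (-(63/200)*c) * S \<le> 3"
      using final_numeric[OF c18] unfolding S_def .
    have "infsum (\<lambda>x. E x y) UNIV \<le> 3 * exp (-c * g y) + exp (-c*(7/10)) * S"
      using split m1 m2 SG by (smt (verit) exp_gt_zero mult_left_mono)
    also have "\<dots> \<le> 3 * (exp (-c * g y0) * exp (-1/10)) + (exp (-c * g y0) * exp (-(63/200)*c)) * S"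
    proof -
      have S0: "0 \<le> S" using SG Gs(1) infsum_nonneg[of UNIV "Gf c"] Gf_nonneg by (smt (verit))
      show ?thesis using e1 e2 S0 by (smt (verit) mult_right_mono)
    qed
    also have "\<dots> = exp (-c * g y0) * (3 * exp (-1/10) + exp (-(63/200)*c) * S)"
      by (simp add: algebra_simps)
    also have "\<dots> \<le> exp (-c * g y0) * 3"
      using fin by (intro mult_left_mono) auto
    finally show ?thesis by simp
  qed
  show ?thesis
  proof (intro exI[of _ ym] conjI allI impI)
    show "sqrt 3 / 2 \<le> ym" using ym(1) unfolding y0_def by simp
    show "ym \<le> sqrt 3 / 2 + 1 / (3 * sqrt \<alpha>)" using ym(1) unfolding y1_def y0_def \<delta>_def by simp
    fix y assume y: "sqrt 3 / 2 \<le> y"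
    show "f_alpha \<alpha> y \<le> f_alpha \<alpha> ym"
    proof (cases "y \<le> y1")
      case True
      then show ?thesis using ym(2)[of y] y unfolding fE y0_def by simp
    next
      case False
      have "infsum (\<lambda>x. E x y) UNIV \<le> 3 * exp (-c * g y0)" using up False by simp
      also have "\<dots> \<le> infsum (\<lambda>x. E x y0) UNIV" by (rule low)
      also have "\<dots> \<le> infsum (\<lambda>x. E x ym) UNIV" using ym(2)[of y0] y01 by simp
      finally show ?thesis unfolding fE .
    qed
  qed
qed

end
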